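(* Consider Model A with $\delta>-1$. There exists a constant $C>0$ such that, as $n\to\infty$, $$\mathbf P\Bigl(\max_{k}\bigl|N_{>k}(n)-np_{>k}\bigr|\ge C\bigl(1+\sqrt{n\log n}\bigr)\Bigr)=o(1).$$
   Context: Model A (with $\delta>-1$): $G(1)$ consists of a single node $v_1$ with a self loop (so $v_1$ has degree 2; a self loop contributes 2 to the degree). For $n\ge1$, given $G(n)$ (nodes $v_1,\dots,v_n$, $n$ edges), $G(n+1)$ is obtained by adding a new node $v_{n+1}$ and one edge joining $v_{n+1}$ to an existing node $v_i$, $1\le i\le n$, chosen with probability $\frac{D_i(n)+\delta}{(2+\delta)n}$, where $D_i(n)$ is the degree of $v_i$ in $G(n)$. $N_{>k}(n):=\#\{1\le i\le n: D_i(n)>k\}$ for $k\ge1$, $N_{>0}(n):=n$. For $k\ge0$, $$p_{>k}:=\frac{\Gamma(k+1+\delta)\,\Gamma(3+2\delta)}{\Gamma(k+3+2\delta)\,\Gamma(1+\delta)}.$$ *)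

theory Defs
  imports "HOL-Probability.Probability"
begin

text \<open>Model A (preferential attachment tree with a self loop at v1).
  The state G(n) is represented by its degree sequence: a list ds of length n,
  where ds ! (i-1) = D_i(n).  The attachment rule depends only on degrees, so the
  degree-sequence process has exactly the law of the degree sequence of G(n).\<close>

definition attach_weight :: "real \<Rightarrow> nat list \<Rightarrow> nat \<Rightarrow> real" where
  "attach_weight \<delta> ds i =
     (if i < length ds then (real (ds ! i) + \<delta>) / ((2 + \<delta>) * real (length ds)) else 0)"

definition modelA_step :: "real \<Rightarrow> nat list \<Rightarrow> nat list pmf" where
  "modelA_step \<delta> ds =
     map_pmf (\<lambda>i. ds[i := ds ! i + 1] @ [1]) (embed_pmf (attach_weight \<delta> ds))"

text \<open>modelA_aux delta m is the law of (the degree sequence of) G(m+1).\<close>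
primrec modelA_aux :: "real \<Rightarrow> nat \<Rightarrow> nat list pmf" where
  "modelA_aux \<delta> 0 = return_pmf [2]"
| "modelA_aux \<delta> (Suc m) = bind_pmf (modelA_aux \<delta> m) (modelA_step \<delta>)"

definition modelA :: "real \<Rightarrow> nat \<Rightarrow> nat list pmf" where
  "modelA \<delta> n = modelA_aux \<delta> (n - 1)"

definition N_gt :: "nat \<Rightarrow> nat list \<Rightarrow> nat" where
  "N_gt k ds = (if k = 0 then length ds else card {i. i < length ds \<and> ds ! i > k})"

definition p_gt :: "real \<Rightarrow> nat \<Rightarrow> real" where
  "p_gt \<delta> k = Gamma (real k + 1 + \<delta>) * Gamma (3 + 2 * \<delta>) /
                (Gamma (real k + 3 + 2 * \<delta>) * Gamma (1 + \<delta>))"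

end

theory Submission
  imports Defs
begin



definition upd :: "nat list \<Rightarrow> nat \<Rightarrow> nat list" where
  "upd ds i = ds[i := ds ! i + 1] @ [1]"

definition dinv :: "nat \<Rightarrow> nat list \<Rightarrow> bool" where
  "dinv L ds \<longleftrightarrow> length ds = L \<and> (\<forall>i<L. 1 \<le> ds!i \<and> ds!i \<le> L+1) \<and> (\<Sum>i<L. ds!i) = 2*L"

definition SS :: "(nat \<Rightarrow> real) \<Rightarrow> nat list \<Rightarrow> real" where
  "SS g ds = (\<Sum>j<length ds. g (ds!j))"

lemma SS_upd:
  assumes "i < length ds"
  shows "SS g (upd ds i) = SS g ds - g (ds!i) + g (ds!i+1) + g 1"
proof -
  have 1: "SS g (upd ds i) = (\<Sum>j<length ds. g (ds[i := ds ! i + 1] ! j)) + g 1"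
    by (simp add: SS_def upd_def nth_append)
  have 2: "(\<Sum>j<length ds. g (ds[i := ds ! i + 1] ! j))
      = (\<Sum>j<length ds. g (ds!j) + (if j = i then g (ds!i+1) - g (ds!i) else 0))"
    by (rule sum.cong) (auto simp: nth_list_update)
  have 3: "(\<Sum>j<length ds. g (ds!j) + (if j = i then g (ds!i+1) - g (ds!i) else 0)) = SS g ds + (g (ds!i+1) - g (ds!i))"
    using assms by (simp add: sum.distrib SS_def)
  show ?thesis using 1 2 3 by simp
qed

lemma inv_upd:
  assumes "dinv L ds" "i < L"
  shows "dinv (Suc L) (upd ds i)"
proof -
  have len: "length ds = L" using assms by (simp add: dinv_def)
  have "(\<Sum>j<Suc L. upd ds i ! j) = (\<Sum>j<L. ds[i := ds ! i + 1] ! j) + 1"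
    using len by (simp add: upd_def nth_append)
  also have "(\<Sum>j<L. ds[i := ds ! i + 1] ! j) = (\<Sum>j<L. ds!j + (if j = i then 1 else 0))"
    by (rule sum.cong) (auto simp: nth_list_update len)
  also have "\<dots> = (\<Sum>j<L. ds!j) + 1"
    using assms(2) by (simp add: sum.distrib)
  finally have s: "(\<Sum>j<Suc L. upd ds i ! j) = 2 * Suc L" using assms(1) by (simp add: dinv_def)
  have l: "length (upd ds i) = Suc L" using len by (simp add: upd_def)
  have e: "1 \<le> upd ds i ! j \<and> upd ds i ! j \<le> Suc L + 1" if j: "j < Suc L" for j
  proof (cases "j < L")
    case True
    then show ?thesis using assms len by (auto simp: dinv_def upd_def nth_append nth_list_update)
  next
    case False
    then have "j = L" using j by simp
    then show ?thesis using len by (simp add: upd_def nth_append)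
  qed
  show ?thesis unfolding dinv_def using l e s by blast
qed

lemma attach_zero: "length ds \<le> i \<Longrightarrow> attach_weight \<delta> ds i = 0"
  by (simp add: attach_weight_def)

context
  fixes \<delta> :: real
  assumes dgt: "\<delta> > -1"
begin

lemma w_nonneg: "dinv L ds \<Longrightarrow> 0 \<le> attach_weight \<delta> ds i"
proof -
  assume a: "dinv L ds"
  show ?thesis
  proof (cases "i < length ds")
    case True
    then have "1 \<le> ds!i" using a by (simp add: dinv_def)
    then have "0 < real (ds!i) + \<delta>" using dgt by linarith
    moreover have "0 < (2 + \<delta>) * real (length ds)" using dgt True by (intro mult_pos_pos) auto
    ultimately show ?thesis using True by (simp add: attach_weight_def)
  qed (simp add: attach_weight_def)
qed

lemma w_le1: "dinv L ds \<Longrightarrow> attach_weight \<delta> ds i \<le> 1"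
proof -
  assume a: "dinv L ds"
  show ?thesis
  proof (cases "i < length ds")
    case True
    then have L: "length ds = L" "L \<ge> 1" and d: "ds!i \<le> L + 1" using a by (auto simp: dinv_def)
    have "real (ds!i) + \<delta> \<le> real L + 1 + \<delta>" using d by simp
    also have "\<dots> \<le> (2 + \<delta>) * real L"
    proof -
      have "(real L - 1) * (1 + \<delta>) \<ge> 0" using L dgt by simp
      then show ?thesis by (simp add: algebra_simps)
    qed
    finally show ?thesis using True L dgt by (simp add: attach_weight_def)
  qed (simp add: attach_weight_def)
qed

lemma w_sum: assumes "dinv L ds" "L \<ge> 1" shows "(\<Sum>i<L. attach_weight \<delta> ds i) = 1"
proof -
  have len: "length ds = L" using assms by (simp add: dinv_def)
  have h: "(\<Sum>i<L. ds!i) = 2*L" using assms(1) by (simp add: dinv_def)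
  have "(\<Sum>i<L. real (ds!i)) = real (\<Sum>i<L. ds!i)" by simp
  also have "\<dots> = 2 * real L" using h by simp
  finally have s: "(\<Sum>i<L. real (ds!i)) = 2 * real L" .
  have "(\<Sum>i<L. attach_weight \<delta> ds i) = (\<Sum>i<L. (real (ds ! i) + \<delta>)) / ((2 + \<delta>) * real L)"
    by (simp add: attach_weight_def len sum_divide_distrib)
  also have "(\<Sum>i<L. (real (ds ! i) + \<delta>)) = (2 + \<delta>) * real L"
    by (simp add: sum.distrib s algebra_simps)
  finally show ?thesis using assms dgt by simp
qed

lemma embed_ok: assumes "dinv L ds" "L \<ge> 1"
  shows "(\<integral>\<^sup>+x. ennreal (attach_weight \<delta> ds x) \<partial>count_space UNIV) = 1"
proof -
  have len: "length ds = L" using assms by (simp add: dinv_def)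
  have "(\<integral>\<^sup>+x. ennreal (attach_weight \<delta> ds x) \<partial>count_space UNIV)
        = (\<Sum>x<L. ennreal (attach_weight \<delta> ds x))"
    by (rule nn_integral_count_space') (auto simp: attach_zero len)
  also have "\<dots> = ennreal (\<Sum>x<L. attach_weight \<delta> ds x)"
    using w_nonneg[OF assms(1)] by (simp add: sum_ennreal)
  finally show ?thesis using w_sum[OF assms] by simp
qed

lemma pmf_w: assumes "dinv L ds" "L \<ge> 1"
  shows "pmf (embed_pmf (attach_weight \<delta> ds)) i = attach_weight \<delta> ds i"
  by (rule pmf_embed_pmf) (use w_nonneg[OF assms(1)] embed_ok[OF assms] in auto)

lemma set_w: assumes "dinv L ds" "L \<ge> 1"
  shows "set_pmf (embed_pmf (attach_weight \<delta> ds)) \<subseteq> {..<L}"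
proof -
  have len: "length ds = L" using assms by (simp add: dinv_def)
  have eq: "set_pmf (embed_pmf (attach_weight \<delta> ds)) = {x. attach_weight \<delta> ds x \<noteq> 0}"
    by (rule set_embed_pmf) (use w_nonneg[OF assms(1)] embed_ok[OF assms] in auto)
  show ?thesis
  proof
    fix x assume "x \<in> set_pmf (embed_pmf (attach_weight \<delta> ds))"
    then have "attach_weight \<delta> ds x \<noteq> 0" using eq by simp
    then show "x \<in> {..<L}" using attach_zero[of ds x \<delta>] len by (cases "x < L") auto
  qed
qed

lemma set_step: assumes "dinv L ds" "L \<ge> 1"
  shows "set_pmf (modelA_step \<delta> ds) \<subseteq> upd ds ` {..<L}"
  using set_w[OF assms] by (auto simp: modelA_step_def upd_def)

lemma exp_step: assumes "dinv L ds" "L \<ge> 1"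
  shows "measure_pmf.expectation (modelA_step \<delta> ds) F = (\<Sum>i<L. attach_weight \<delta> ds i * F (upd ds i))"
proof -
  have "measure_pmf.expectation (modelA_step \<delta> ds) F
      = measure_pmf.expectation (embed_pmf (attach_weight \<delta> ds)) (\<lambda>i. F (upd ds i))"
    by (simp add: modelA_step_def upd_def)
  also have "\<dots> = (\<Sum>i<L. pmf (embed_pmf (attach_weight \<delta> ds)) i *\<^sub>R F (upd ds i))"
    by (rule integral_measure_pmf) (use set_w[OF assms] in auto)
  finally show ?thesis using pmf_w[OF assms] by simp
qed

lemma nn_step: assumes "dinv L ds" "L \<ge> 1"
  shows "(\<integral>\<^sup>+x. F x \<partial>modelA_step \<delta> ds) = (\<Sum>i<L. ennreal (attach_weight \<delta> ds i) * F (upd ds i))"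
proof -
  have "(\<integral>\<^sup>+x. F x \<partial>modelA_step \<delta> ds)
      = (\<integral>\<^sup>+i. F (upd ds i) \<partial>embed_pmf (attach_weight \<delta> ds))"
    by (simp add: modelA_step_def upd_def)
  also have "\<dots> = (\<integral>\<^sup>+i. ennreal (pmf (embed_pmf (attach_weight \<delta> ds)) i) * F (upd ds i) \<partial>count_space UNIV)"
    by (rule nn_integral_measure_pmf)
  also have "\<dots> = (\<Sum>i<L. ennreal (pmf (embed_pmf (attach_weight \<delta> ds)) i) * F (upd ds i))"
    by (rule nn_integral_count_space') (use pmf_w[OF assms] attach_zero[of ds] assms(1) in \<open>auto simp: dinv_def\<close>)
  finally show ?thesis using pmf_w[OF assms] by simp
qed

lemma inv_aux: "x \<in> set_pmf (modelA_aux \<delta> m) \<Longrightarrow> dinv (Suc m) x"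
proof (induction m arbitrary: x)
  case 0
  then show ?case by (simp add: dinv_def)
next
  case (Suc m)
  then obtain y where y: "y \<in> set_pmf (modelA_aux \<delta> m)" "x \<in> set_pmf (modelA_step \<delta> y)" by auto
  have iy: "dinv (Suc m) y" using Suc.IH y(1) .
  then obtain i where "i < Suc m" "x = upd y i" using set_step[OF iy] y(2) by auto
  then show ?case using inv_upd[OF iy] by simp
qed

lemma fin_step: "dinv L ds \<Longrightarrow> L \<ge> 1 \<Longrightarrow> finite (set_pmf (modelA_step \<delta> ds))"
  by (rule finite_subset[OF set_step]) auto

lemma fin_aux: "finite (set_pmf (modelA_aux \<delta> m))"
proof (induction m)
  case (Suc m)
  have "finite (\<Union>y\<in>set_pmf (modelA_aux \<delta> m). set_pmf (modelA_step \<delta> y))"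
    by (intro finite_UN_I Suc fin_step[OF inv_aux]) auto
  then show ?case by simp
qed simp

lemma exp_bind_aux:
  fixes h :: "nat list \<Rightarrow> real"
  shows "measure_pmf.expectation (modelA_aux \<delta> (Suc m)) h
    = measure_pmf.expectation (modelA_aux \<delta> m) (\<lambda>ds. measure_pmf.expectation (modelA_step \<delta> ds) h)"
proof -
  have "measure_pmf.expectation (modelA_aux \<delta> (Suc m)) h
     = (\<Sum>a\<in>set_pmf (modelA_aux \<delta> m). pmf (modelA_aux \<delta> m) a *\<^sub>R measure_pmf.expectation (modelA_step \<delta> a) h)"
    unfolding modelA_aux.simps
    by (rule pmf_expectation_bind[where A="set_pmf (modelA_aux \<delta> m)"])
       (use fin_aux in \<open>auto intro!: fin_step[OF inv_aux]\<close>)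
  also have "\<dots> = measure_pmf.expectation (modelA_aux \<delta> m) (\<lambda>ds. measure_pmf.expectation (modelA_step \<delta> ds) h)"
    by (rule integral_measure_pmf[symmetric]) (use fin_aux in auto)
  finally show ?thesis .
qed

end



lemma Ngt_le: "N_gt k ds \<le> length ds"
proof -
  have "card {i. i < length ds \<and> ds ! i > k} \<le> card {..<length ds}"
    by (rule card_mono) auto
  then show ?thesis by (simp add: N_gt_def)
qed

lemma Ngt_SS: assumes "dinv L ds"
  shows "real (N_gt k ds) = SS (\<lambda>d. if k < d then 1 else 0) ds"
proof (cases "k = 0")
  case True
  have "SS (\<lambda>d. if k < d then 1 else 0) ds = (\<Sum>j<length ds. 1)"
    unfolding SS_def using assms True by (intro sum.cong) (auto simp: dinv_def)
  then show ?thesis using True by (simp add: N_gt_def)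
next
  case False
  have "SS (\<lambda>d. if k < d then 1 else 0) ds = (\<Sum>j\<in>{j\<in>{..<length ds}. k < ds!j}. 1)"
    unfolding SS_def by (rule sum.inter_filter[symmetric]) simp
  also have "{j\<in>{..<length ds}. k < ds!j} = {i. i < length ds \<and> ds ! i > k}" by auto
  finally show ?thesis using False by (simp add: N_gt_def)
qed

lemma Ngt_zero_big: assumes "dinv L ds" "k \<ge> L + 1" shows "N_gt k ds = 0"
proof -
  have "{i. i < length ds \<and> ds ! i > k} = {}" using assms by (auto simp: dinv_def)
  then show ?thesis using assms by (simp add: N_gt_def)
qed

lemma pmf_int_cong:
  fixes f g :: "'a \<Rightarrow> real"
  assumes "\<And>x. x \<in> set_pmf M \<Longrightarrow> f x = g x"
  shows "measure_pmf.expectation M f = measure_pmf.expectation M g"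
  by (rule integral_cong_AE) (use assms in \<open>auto simp: AE_measure_pmf_iff\<close>)

context
  fixes \<delta> :: real
  assumes dgt: "\<delta> > -1"
begin

lemma exp_step_N0: assumes "dinv L ds" "L \<ge> 1"
  shows "measure_pmf.expectation (modelA_step \<delta> ds) (\<lambda>x. real (N_gt 0 x)) = real L + 1"
proof -
  have "measure_pmf.expectation (modelA_step \<delta> ds) (\<lambda>x. real (N_gt 0 x))
      = (\<Sum>i<L. attach_weight \<delta> ds i * (1 + real L))"
    using exp_step[OF dgt assms] assms by (simp add: N_gt_def upd_def dinv_def)
  also have "\<dots> = 1 + real L" using w_sum[OF dgt assms] by (simp add: sum_distrib_right[symmetric])
  finally show ?thesis by simp
qed

lemma exp_step_N: assumes "dinv L ds" "L \<ge> 1" "k \<ge> 1"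
  shows "measure_pmf.expectation (modelA_step \<delta> ds) (\<lambda>x. real (N_gt k x))
    = real (N_gt k ds) + (real k + \<delta>) / ((2 + \<delta>) * real L) * (real (N_gt (k-1) ds) - real (N_gt k ds))"
proof -
  have len: "length ds = L" using assms by (simp add: dinv_def)
  let ?I = "\<lambda>k d. if k < d then 1 else (0::real)"
  let ?X = "real (N_gt k ds)"
  have eq1: "real (N_gt k (upd ds i)) = ?X + (if ds!i = k then 1 else 0)" if i: "i < L" for i
  proof -
    have "real (N_gt k (upd ds i)) = SS (?I k) (upd ds i)"
      by (rule Ngt_SS[OF inv_upd[OF assms(1) i]])
    also have "\<dots> = SS (?I k) ds - ?I k (ds!i) + ?I k (ds!i+1) + ?I k 1"
      using i len by (intro SS_upd) simp
    also have "SS (?I k) ds = ?X" using Ngt_SS[OF assms(1)] by simp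
    finally show ?thesis using assms(3) by auto
  qed
  have "measure_pmf.expectation (modelA_step \<delta> ds) (\<lambda>x. real (N_gt k x))
      = (\<Sum>i<L. attach_weight \<delta> ds i * (?X + (if ds!i = k then 1 else 0)))"
    using exp_step[OF dgt assms(1,2)] eq1 by simp
  also have "\<dots> = ?X * (\<Sum>i<L. attach_weight \<delta> ds i) + (\<Sum>i<L. attach_weight \<delta> ds i * (if ds!i = k then 1 else 0))"
    by (simp add: algebra_simps sum.distrib sum_distrib_left)
  also have "(\<Sum>i<L. attach_weight \<delta> ds i * (if ds!i = k then 1 else 0))
      = (\<Sum>i<L. (real k + \<delta>) / ((2 + \<delta>) * real L) * (if ds!i = k then 1 else 0))"
    by (rule sum.cong) (auto simp: attach_weight_def len)
  also have "\<dots> = (real k + \<delta>) / ((2 + \<delta>) * real L) * (\<Sum>i<L. (if ds!i = k then 1 else 0))"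
    by (simp add: sum_distrib_left)
  also have "(\<Sum>i<L. (if ds!i = k then 1 else (0::real))) = real (N_gt (k-1) ds) - ?X"
  proof -
    have "real (N_gt (k-1) ds) - ?X = SS (?I (k-1)) ds - SS (?I k) ds"
      using Ngt_SS[OF assms(1)] by simp
    also have "\<dots> = (\<Sum>i<L. ?I (k-1) (ds!i) - ?I k (ds!i))"
      by (simp add: SS_def len sum_subtractf)
    also have "\<dots> = (\<Sum>i<L. (if ds!i = k then 1 else (0::real)))"
      using assms(3) by (intro sum.cong) auto
    finally show ?thesis by simp
  qed
  finally show ?thesis using w_sum[OF dgt assms(1,2)] by simp
qed

lemma Gamma_nz: "x > 0 \<Longrightarrow> Gamma (x::real) \<noteq> 0"
  using Gamma_real_pos by (metis less_irrefl)

lemma Gamma_p1: "x > 0 \<Longrightarrow> Gamma ((x::real) + 1) = x * Gamma x"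
  by (rule Gamma_plus1) (use nonpos_Ints_nonpos in force)

lemma p0: "p_gt \<delta> 0 = 1"
proof -
  have "Gamma (1 + \<delta>) \<noteq> 0" "Gamma (3 + 2 * \<delta>) \<noteq> 0" using dgt by (auto intro!: Gamma_nz)
  then show ?thesis by (simp add: p_gt_def)
qed

lemma pSuc: "p_gt \<delta> (Suc k) = p_gt \<delta> k * (real k + 1 + \<delta>) / (real k + 3 + 2 * \<delta>)"
proof -
  have a: "real k + 1 + \<delta> > 0" "real k + 3 + 2 * \<delta> > 0" using dgt by auto
  have "Gamma (real (Suc k) + 1 + \<delta>) = Gamma ((real k + 1 + \<delta>) + 1)" by (simp add: algebra_simps)
  also have "\<dots> = (real k + 1 + \<delta>) * Gamma (real k + 1 + \<delta>)" using a by (intro Gamma_p1)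
  finally have g1: "Gamma (real (Suc k) + 1 + \<delta>) = (real k + 1 + \<delta>) * Gamma (real k + 1 + \<delta>)" .
  have "Gamma (real (Suc k) + 3 + 2 * \<delta>) = Gamma ((real k + 3 + 2 * \<delta>) + 1)" by (simp add: algebra_simps)
  also have "\<dots> = (real k + 3 + 2 * \<delta>) * Gamma (real k + 3 + 2 * \<delta>)" using a by (intro Gamma_p1)
  finally have g2: "Gamma (real (Suc k) + 3 + 2 * \<delta>) = (real k + 3 + 2 * \<delta>) * Gamma (real k + 3 + 2 * \<delta>)" .
  have nz: "Gamma (real k + 3 + 2 * \<delta>) \<noteq> 0" "Gamma (1 + \<delta>) \<noteq> 0" using a dgt by (auto intro!: Gamma_nz)
  show ?thesis unfolding p_gt_def g1 g2 using a nz by (simp add: field_simps)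
qed

lemma p_props: "0 \<le> p_gt \<delta> k \<and> p_gt \<delta> k \<le> 1 \<and> real k * p_gt \<delta> k \<le> 1"
proof (induction k)
  case 0
  then show ?case by (simp add: p0)
next
  case (Suc k)
  let ?p = "p_gt \<delta> k"
  have a: "real k + 1 + \<delta> > 0" "real k + 3 + 2 * \<delta> > 0" using dgt by auto
  let ?r = "(real k + 1 + \<delta>) / (real k + 3 + 2 * \<delta>)"
  have r0: "0 \<le> ?r" using a by simp
  have r1: "?r \<le> 1" using a dgt by (simp add: divide_le_eq)
  have ps: "p_gt \<delta> (Suc k) = ?p * ?r" by (simp add: pSuc)
  have 1: "0 \<le> p_gt \<delta> (Suc k)" unfolding ps by (rule mult_nonneg_nonneg) (use Suc r0 in auto)
  have 2: "p_gt \<delta> (Suc k) \<le> 1" unfolding ps by (rule mult_le_one) (use Suc r0 r1 in auto)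
  have 3: "real (Suc k) * p_gt \<delta> (Suc k) \<le> 1"
  proof (cases "k = 0")
    case True
    then show ?thesis using ps r1 p0 by simp
  next
    case False
    have "(real k + 1) * (real k + 1 + \<delta>) \<le> real k * (real k + 3 + 2 * \<delta>)"
    proof -
      have "(1 + \<delta>) * (real k - 1) \<ge> 0" using False dgt by simp
      then show ?thesis by (simp add: algebra_simps)
    qed
    then have q: "(real k + 1) * ?r \<le> real k" using a by (simp add: divide_le_eq mult.commute)
    have "real (Suc k) * p_gt \<delta> (Suc k) = ((real k + 1) * ?r) * ?p" using ps by simp
    also have "\<dots> \<le> real k * ?p" using q Suc by (intro mult_right_mono) auto
    also have "\<dots> \<le> 1" using Suc by simp
    finally show ?thesis .
  qed
  show ?case using 1 2 3 by simp
qed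

lemma p_rec: "real (Suc j) + \<delta> > 0 \<Longrightarrow> (real (Suc j) + \<delta>) * (p_gt \<delta> j - p_gt \<delta> (Suc j)) = (2 + \<delta>) * p_gt \<delta> (Suc j)"
proof -
  have a: "real j + 3 + 2 * \<delta> > 0" using dgt by auto
  have "p_gt \<delta> (Suc j) * (real j + 3 + 2 * \<delta>) = p_gt \<delta> j * (real j + 1 + \<delta>)"
    using a by (simp add: pSuc)
  then show ?thesis by (simp add: algebra_simps)
qed

definition ee :: "nat \<Rightarrow> nat \<Rightarrow> real" where
  "ee m k = measure_pmf.expectation (modelA_aux \<delta> m) (\<lambda>x. real (N_gt k x))"

lemma int_fin: "integrable (measure_pmf (modelA_aux \<delta> m)) (f :: _ \<Rightarrow> real)"
  by (rule integrable_measure_pmf_finite) (rule fin_aux[OF dgt])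

lemma ee_bound: "\<bar>ee m k - real (Suc m) * p_gt \<delta> k\<bar> \<le> 1"
proof (induction m arbitrary: k)
  case 0
  have X: "real (N_gt k [2]) \<le> 1" using Ngt_le[of k "[2]"] by simp
  have "ee 0 k = real (N_gt k [2])" by (simp add: ee_def)
  then show ?case unfolding abs_le_iff using X p_props[of k] by auto
next
  case (Suc m)
  let ?L = "Suc m"
  show ?case
  proof (cases k)
    case 0
    have "ee (Suc m) 0 = measure_pmf.expectation (modelA_aux \<delta> m) (\<lambda>ds. real ?L + 1)"
      unfolding ee_def exp_bind_aux[OF dgt]
      by (rule pmf_int_cong) (simp add: exp_step_N0[OF inv_aux[OF dgt]])
    then show ?thesis using 0 p0 by simp
  next
    case (Suc j)
    define c where "c = (real k + \<delta>) / ((2 + \<delta>) * real ?L)"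
    have kd: "real k + \<delta> > 0" using dgt Suc by simp
    have c0: "c \<ge> 0" using kd dgt by (simp add: c_def)
    show ?thesis
    proof (cases "c \<le> 1")
      case True
      have "ee (Suc m) k = measure_pmf.expectation (modelA_aux \<delta> m)
          (\<lambda>ds. real (N_gt k ds) + c * (real (N_gt j ds) - real (N_gt k ds)))"
        unfolding ee_def exp_bind_aux[OF dgt]
        by (rule pmf_int_cong) (simp add: exp_step_N[OF inv_aux[OF dgt]] Suc c_def)
      also have "\<dots> = ee m k + c * (ee m j - ee m k)"
        unfolding ee_def by (simp add: int_fin)
      finally have e: "ee (Suc m) k = ee m k + c * (ee m j - ee m k)" .
      have cp: "c * real ?L * (p_gt \<delta> j - p_gt \<delta> k) = p_gt \<delta> k"
      proof -
        have nz: "2 + \<delta> \<noteq> 0" "real ?L \<noteq> 0" using dgt by auto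
        have gen: "\<And>x y. (y::real) \<noteq> 0 \<Longrightarrow> x / y * y = x" by simp
        have nz': "(2 + \<delta>) * real ?L \<noteq> 0" using nz by simp
        have A0: "c * ((2 + \<delta>) * real ?L) = real k + \<delta>" using gen[OF nz'] unfolding c_def .
        have A: "c * real ?L * (2 + \<delta>) = real k + \<delta>" using A0 by (simp add: ac_simps)
        have R: "(real k + \<delta>) * (p_gt \<delta> j - p_gt \<delta> k) = (2 + \<delta>) * p_gt \<delta> k"
          using p_rec[of j] kd Suc by simp
        have "(2 + \<delta>) * (c * real ?L * (p_gt \<delta> j - p_gt \<delta> k))
             = (c * real ?L * (2 + \<delta>)) * (p_gt \<delta> j - p_gt \<delta> k)" by (simp add: algebra_simps)
        also have "\<dots> = (2 + \<delta>) * p_gt \<delta> k" using A R by simp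
        finally show ?thesis using dgt by simp
      qed
      have "ee (Suc m) k - real (Suc ?L) * p_gt \<delta> k
          = (1 - c) * (ee m k - real ?L * p_gt \<delta> k) + c * (ee m j - real ?L * p_gt \<delta> j)"
        using e cp by (simp add: algebra_simps)
      also have "\<bar>\<dots>\<bar> \<le> (1 - c) * 1 + c * 1"
      proof -
        have "\<bar>(1 - c) * (ee m k - real ?L * p_gt \<delta> k)\<bar> \<le> (1 - c) * 1"
          using Suc.IH[of k] True by (simp add: abs_mult mult_left_le)
        moreover have "\<bar>c * (ee m j - real ?L * p_gt \<delta> j)\<bar> \<le> c * 1"
          using Suc.IH[of j] c0 by (simp add: abs_mult mult_left_le)
        ultimately show ?thesis by (rule abs_triangle_ineq[THEN order_trans, OF add_mono])
      qed
      finally show ?thesis by simp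
    next
      case False
      have gen2: "\<And>a b::real. b > 0 \<Longrightarrow> 1 < a / b \<Longrightarrow> b < a" by (simp add: less_divide_eq)
      have bpos: "(2 + \<delta>) * real ?L > 0" using dgt by (intro mult_pos_pos) auto
      have "real k + \<delta> > (2 + \<delta>) * real ?L"
        by (rule gen2[OF bpos]) (use False in \<open>simp only: c_def not_le\<close>)
      moreover have "(real ?L - 1) * (1 + \<delta>) \<ge> 0" using dgt by simp
      ultimately have "real k > real ?L + 1" by (simp add: algebra_simps)
      then have kL: "k \<ge> Suc ?L + 1" by linarith
      have "ee (Suc m) k = measure_pmf.expectation (modelA_aux \<delta> (Suc m)) (\<lambda>ds. 0)"
        unfolding ee_def
      proof (rule pmf_int_cong)
        fix x assume "x \<in> set_pmf (modelA_aux \<delta> (Suc m))"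
        then have "dinv (Suc (Suc m)) x" by (rule inv_aux[OF dgt])
        then show "real (N_gt k x) = 0" using Ngt_zero_big kL by simp
      qed
      then have "ee (Suc m) k = 0" by simp
      moreover have "real (Suc ?L) * p_gt \<delta> k \<le> real k * p_gt \<delta> k"
        using kL p_props[of k] by (intro mult_right_mono) auto
      ultimately show ?thesis using p_props[of k] by simp
    qed
  qed
qed

lemma ee_bound': "\<bar>measure_pmf.expectation (modelA_aux \<delta> m) (\<lambda>x. real (N_gt k x)) - real (Suc m) * p_gt \<delta> k\<bar> \<le> 1"
  using ee_bound[of m k] by (simp add: ee_def)

end



definition clip :: "real \<Rightarrow> real" where "clip x = max 0 (min 1 x)"

primrec gg :: "real \<Rightarrow> nat \<Rightarrow> nat \<Rightarrow> nat \<Rightarrow> nat \<Rightarrow> real" where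
  "gg \<delta> k N 0 d = (if k < d then 1 else 0)"
| "gg \<delta> k N (Suc r) d = (let c = clip ((real d + \<delta>) / ((2 + \<delta>) * real (N - r)))
      in (1 - c) * gg \<delta> k N r d + c * gg \<delta> k N r (Suc d))"

primrec hh :: "real \<Rightarrow> nat \<Rightarrow> nat \<Rightarrow> nat \<Rightarrow> real" where
  "hh \<delta> k N 0 = 0"
| "hh \<delta> k N (Suc r) = hh \<delta> k N r + gg \<delta> k N r 1"

definition ff :: "real \<Rightarrow> nat \<Rightarrow> nat \<Rightarrow> nat \<Rightarrow> nat list \<Rightarrow> real" where
  "ff \<delta> k N m ds = SS (gg \<delta> k N (N - m)) ds + hh \<delta> k N (N - m)"

lemma gg_bounds: "0 \<le> gg \<delta> k N r d \<and> gg \<delta> k N r d \<le> 1"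
proof (induction r arbitrary: d)
  case (Suc r)
  define c where "c = clip ((real d + \<delta>) / ((2 + \<delta>) * real (N - r)))"
  have c: "0 \<le> c" "c \<le> 1" by (auto simp: c_def clip_def)
  have "gg \<delta> k N (Suc r) d = (1 - c) * gg \<delta> k N r d + c * gg \<delta> k N r (Suc d)"
    by (simp add: c_def Let_def)
  moreover have "0 \<le> (1 - c) * gg \<delta> k N r d + c * gg \<delta> k N r (Suc d)"
    using Suc[of d] Suc[of "Suc d"] c by simp
  moreover have "(1 - c) * gg \<delta> k N r d + c * gg \<delta> k N r (Suc d) \<le> (1 - c) * 1 + c * 1"
    using Suc[of d] Suc[of "Suc d"] c by (intro add_mono mult_left_mono) auto
  ultimately show ?case by simp
qed simp

context
  fixes \<delta> :: real
  assumes dgt: "\<delta> > -1"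
begin

lemma ff_mart:
  assumes m: "m < N" and ds: "ds \<in> set_pmf (modelA_aux \<delta> m)"
  shows "measure_pmf.expectation (modelA_step \<delta> ds) (ff \<delta> k N (Suc m)) = ff \<delta> k N m ds"
    and "\<And>i. i < Suc m \<Longrightarrow> \<bar>ff \<delta> k N (Suc m) (upd ds i) - ff \<delta> k N m ds\<bar> \<le> 2"
proof -
  define L where "L = Suc m"
  define r where "r = N - Suc m"
  have Nm: "N - m = Suc r" "N - r = L" using m by (auto simp: r_def L_def)
  have inv: "dinv L ds" using inv_aux[OF dgt ds] by (simp add: L_def)
  have len: "length ds = L" using inv by (simp add: dinv_def)
  have L1: "L \<ge> 1" by (simp add: L_def)
  define g where "g = gg \<delta> k N r"
  define D where "D d = g (Suc d) - g d" for d
  define w where "w = attach_weight \<delta> ds"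
  define A where "A = (\<Sum>i<L. w i * D (ds!i))"
  have D1: "\<bar>D d\<bar> \<le> 1" for d using gg_bounds[of \<delta> k N r d] gg_bounds[of \<delta> k N r "Suc d"]
    by (simp add: D_def g_def abs_le_iff)
  have wsum: "(\<Sum>i<L. w i) = 1" using w_sum[OF dgt inv L1] by (simp add: w_def)
  have w0: "0 \<le> w i" for i using w_nonneg[OF dgt inv] by (simp add: w_def)
  have A1: "\<bar>A\<bar> \<le> 1"
  proof -
    have "\<bar>A\<bar> \<le> (\<Sum>i<L. \<bar>w i * D (ds!i)\<bar>)" unfolding A_def by (rule sum_abs)
    also have "\<dots> \<le> (\<Sum>i<L. w i)"
      by (intro sum_mono) (use w0 D1 in \<open>auto simp: abs_mult intro: mult_left_le\<close>)
    finally show ?thesis using wsum by simp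
  qed
  have ggS: "gg \<delta> k N (Suc r) (ds!i) = g (ds!i) + w i * D (ds!i)" if i: "i < L" for i
  proof -
    have wi: "w i = (real (ds!i) + \<delta>) / ((2 + \<delta>) * real L)"
      using i len by (simp add: w_def attach_weight_def)
    have eq: "(real (ds!i) + \<delta>) / ((2 + \<delta>) * real (N - r)) = w i"
      by (simp only: wi Nm(2))
    have cl: "clip (w i) = w i" unfolding clip_def using w0[of i] w_le1[OF dgt inv, of i] w_def by simp
    have "gg \<delta> k N (Suc r) (ds!i) = (let c = clip ((real (ds!i) + \<delta>) / ((2 + \<delta>) * real (N - r)))
      in (1 - c) * gg \<delta> k N r (ds!i) + c * gg \<delta> k N r (Suc (ds!i)))" by (rule gg.simps(2))
    also have "\<dots> = (1 - w i) * g (ds!i) + w i * g (Suc (ds!i))"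
      unfolding eq cl Let_def g_def ..
    also have "\<dots> = g (ds!i) + w i * D (ds!i)" by (simp add: D_def algebra_simps)
    finally show ?thesis .
  qed
  have ffm: "ff \<delta> k N m ds = SS g ds + A + g 1 + hh \<delta> k N r"
  proof -
    have "SS (gg \<delta> k N (Suc r)) ds = (\<Sum>i<L. g (ds!i) + w i * D (ds!i))"
      unfolding SS_def len by (intro sum.cong refl) (simp del: gg.simps add: ggS)
    also have "\<dots> = SS g ds + A" by (simp add: sum.distrib SS_def len A_def)
    finally show ?thesis by (simp add: ff_def Nm g_def)
  qed
  have ffs: "ff \<delta> k N (Suc m) (upd ds i) = SS g ds + D (ds!i) + g 1 + hh \<delta> k N r" if i: "i < L" for i
  proof -
    have "N - Suc m = r" by (simp add: r_def)
    then have "ff \<delta> k N (Suc m) (upd ds i) = SS g (upd ds i) + hh \<delta> k N r"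
      by (simp add: ff_def g_def)
    also have "SS g (upd ds i) = SS g ds - g (ds!i) + g (ds!i+1) + g 1"
      using i len by (intro SS_upd) simp
    finally show ?thesis by (simp add: D_def)
  qed
  have "measure_pmf.expectation (modelA_step \<delta> ds) (ff \<delta> k N (Suc m))
      = (\<Sum>i<L. w i * (SS g ds + D (ds!i) + g 1 + hh \<delta> k N r))"
    unfolding exp_step[OF dgt inv L1] w_def using ffs by simp
  also have "\<dots> = (\<Sum>i<L. (SS g ds + g 1 + hh \<delta> k N r) * w i + w i * D (ds!i))"
    by (rule sum.cong) (simp_all add: algebra_simps)
  also have "\<dots> = (SS g ds + g 1 + hh \<delta> k N r) * (\<Sum>i<L. w i) + A"
    by (simp add: A_def sum.distrib sum_distrib_left)
  also have "\<dots> = ff \<delta> k N m ds" using wsum ffm by simp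
  finally show "measure_pmf.expectation (modelA_step \<delta> ds) (ff \<delta> k N (Suc m)) = ff \<delta> k N m ds" .
  fix i assume "i < Suc m"
  then have i: "i < L" by (simp add: L_def)
  have "ff \<delta> k N (Suc m) (upd ds i) - ff \<delta> k N m ds = D (ds!i) - A" using ffs[OF i] ffm by simp
  then show "\<bar>ff \<delta> k N (Suc m) (upd ds i) - ff \<delta> k N m ds\<bar> \<le> 2" using D1[of "ds!i"] A1 by simp
qed

lemma ff_final: "ds \<in> set_pmf (modelA_aux \<delta> N) \<Longrightarrow> ff \<delta> k N N ds = real (N_gt k ds)"
proof -
  assume a: "ds \<in> set_pmf (modelA_aux \<delta> N)"
  have "gg \<delta> k N 0 = (\<lambda>d. if k < d then 1 else 0)" by (rule ext) simp
  then show ?thesis using Ngt_SS[OF inv_aux[OF dgt a]] by (simp add: ff_def)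
qed

end



context
  fixes \<delta> :: real
  assumes dgt: "\<delta> > -1"
begin

lemma mart_exp:
  fixes f :: "nat \<Rightarrow> nat list \<Rightarrow> real"
  assumes mart: "\<And>m ds. m < N \<Longrightarrow> ds \<in> set_pmf (modelA_aux \<delta> m) \<Longrightarrow>
      measure_pmf.expectation (modelA_step \<delta> ds) (f (Suc m)) = f m ds"
  shows "m \<le> N \<Longrightarrow> measure_pmf.expectation (modelA_aux \<delta> m) (f m) = f 0 [2]"
proof (induction m)
  case 0
  then show ?case by simp
next
  case (Suc m)
  have "measure_pmf.expectation (modelA_aux \<delta> (Suc m)) (f (Suc m))
      = measure_pmf.expectation (modelA_aux \<delta> m) (\<lambda>ds. measure_pmf.expectation (modelA_step \<delta> ds) (f (Suc m)))"
    by (rule exp_bind_aux[OF dgt])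
  also have "\<dots> = measure_pmf.expectation (modelA_aux \<delta> m) (f m)"
    by (rule pmf_int_cong) (use mart Suc.prems in auto)
  also have "\<dots> = f 0 [2]" using Suc by simp
  finally show ?case .
qed

lemma azuma_nn:
  fixes f :: "nat \<Rightarrow> nat list \<Rightarrow> real" and B l :: real
  assumes mart: "\<And>m ds. m < N \<Longrightarrow> ds \<in> set_pmf (modelA_aux \<delta> m) \<Longrightarrow>
      measure_pmf.expectation (modelA_step \<delta> ds) (f (Suc m)) = f m ds"
    and bd: "\<And>m ds i. m < N \<Longrightarrow> ds \<in> set_pmf (modelA_aux \<delta> m) \<Longrightarrow> i < Suc m \<Longrightarrow>
      \<bar>f (Suc m) (upd ds i) - f m ds\<bar> \<le> B"
    and l: "l > 0"
  shows "m \<le> N \<Longrightarrow> (\<integral>\<^sup>+ds. ennreal (exp (l * (f m ds - f 0 [2]))) \<partial>modelA_aux \<delta> m)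
      \<le> ennreal (exp (real m * (l\<^sup>2 * B\<^sup>2 / 2)))"
proof (induction m)
  case 0
  then show ?case by simp
next
  case (Suc m)
  let ?c = "f 0 [2]"
  let ?K = "exp (l\<^sup>2 * B\<^sup>2 / 2)"
  have m: "m < N" using Suc.prems by simp
  have inner: "(\<integral>\<^sup>+ds'. ennreal (exp (l * (f (Suc m) ds' - ?c))) \<partial>modelA_step \<delta> ds)
      \<le> ennreal (exp (l * (f m ds - ?c))) * ennreal ?K" if ds: "ds \<in> set_pmf (modelA_aux \<delta> m)" for ds
  proof -
    have inv: "dinv (Suc m) ds" by (rule inv_aux[OF dgt ds])
    have Bd: "f (Suc m) ds' - f m ds \<in> {-B..B}" if dsin: "ds' \<in> set_pmf (modelA_step \<delta> ds)" for ds'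
    proof -
      obtain i where i: "i < Suc m" "ds' = upd ds i" using set_step[OF dgt inv] dsin by auto
      have h: "\<bar>f (Suc m) ds' - f m ds\<bar> \<le> B" using bd[OF m ds i(1)] i(2) by simp
      then show ?thesis by (auto simp: abs_le_iff)
    qed
    have rv: "(\<lambda>ds'. f (Suc m) ds' - f m ds) \<in> measurable (measure_pmf (modelA_step \<delta> ds)) borel"
      by simp
    have ae: "AE ds' in measure_pmf (modelA_step \<delta> ds). f (Suc m) ds' - f m ds \<in> {-B..B}"
      unfolding AE_measure_pmf_iff using Bd by blast
    interpret X: interval_bounded_random_variable "measure_pmf (modelA_step \<delta> ds)"
        "\<lambda>ds'. f (Suc m) ds' - f m ds" "-B" "B"
      by (intro interval_bounded_random_variable.intro prob_space_measure_pmf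
            interval_bounded_random_variable_axioms.intro rv ae)
    have integ: "integrable (measure_pmf (modelA_step \<delta> ds)) (f (Suc m))"
      by (rule integrable_measure_pmf_finite[OF fin_step[OF dgt inv]]) simp
    have E0: "measure_pmf.expectation (modelA_step \<delta> ds) (\<lambda>ds'. f (Suc m) ds' - f m ds) = 0"
      using mart[OF m ds] integ by (simp add: Bochner_Integration.integral_diff)
    have ex: "l\<^sup>2 * (B - - B)\<^sup>2 / 8 = l\<^sup>2 * B\<^sup>2 / 2" by (simp add: power2_eq_square algebra_simps)
    have H: "(\<integral>\<^sup>+ds'. ennreal (exp (l * (f (Suc m) ds' - f m ds))) \<partial>modelA_step \<delta> ds) \<le> ennreal ?K"
      using X.Hoeffdings_lemma_nn_integral_0[OF l E0] unfolding ex .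
    have "(\<integral>\<^sup>+ds'. ennreal (exp (l * (f (Suc m) ds' - ?c))) \<partial>modelA_step \<delta> ds)
        = (\<integral>\<^sup>+ds'. ennreal (exp (l * (f m ds - ?c))) * ennreal (exp (l * (f (Suc m) ds' - f m ds))) \<partial>modelA_step \<delta> ds)"
    proof (rule nn_integral_cong)
      fix x
      have "exp (l * (f (Suc m) x - ?c)) = exp (l * (f m ds - ?c)) * exp (l * (f (Suc m) x - f m ds))"
        by (simp add: exp_add[symmetric] algebra_simps)
      then show "ennreal (exp (l * (f (Suc m) x - ?c))) = ennreal (exp (l * (f m ds - ?c))) * ennreal (exp (l * (f (Suc m) x - f m ds)))"
        by (simp add: ennreal_mult)
    qed
    also have "\<dots> = ennreal (exp (l * (f m ds - ?c))) * (\<integral>\<^sup>+ds'. ennreal (exp (l * (f (Suc m) ds' - f m ds))) \<partial>modelA_step \<delta> ds)"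
      by (rule nn_integral_cmult) simp
    also have "\<dots> \<le> ennreal (exp (l * (f m ds - ?c))) * ennreal ?K" using H by (intro mult_left_mono) auto
    finally show ?thesis .
  qed
  have "(\<integral>\<^sup>+ds. ennreal (exp (l * (f (Suc m) ds - ?c))) \<partial>modelA_aux \<delta> (Suc m))
      = (\<integral>\<^sup>+ds. (\<integral>\<^sup>+ds'. ennreal (exp (l * (f (Suc m) ds' - ?c))) \<partial>modelA_step \<delta> ds) \<partial>modelA_aux \<delta> m)"
    by (simp only: modelA_aux.simps nn_integral_bind_pmf)
  also have "\<dots> \<le> (\<integral>\<^sup>+ds. ennreal (exp (l * (f m ds - ?c))) * ennreal ?K \<partial>modelA_aux \<delta> m)"
    by (rule nn_integral_mono_AE) (auto simp: AE_measure_pmf_iff intro: inner)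
  also have "\<dots> = (\<integral>\<^sup>+ds. ennreal (exp (l * (f m ds - ?c))) \<partial>modelA_aux \<delta> m) * ennreal ?K"
    by (rule nn_integral_multc) simp
  also have "\<dots> \<le> ennreal (exp (real m * (l\<^sup>2 * B\<^sup>2 / 2))) * ennreal ?K"
    using Suc.IH Suc.prems by (intro mult_right_mono) auto
  also have "\<dots> = ennreal (exp (real (Suc m) * (l\<^sup>2 * B\<^sup>2 / 2)))"
    by (simp add: ennreal_mult[symmetric] exp_add[symmetric] algebra_simps)
  finally show ?case .
qed

lemma azuma_tail:
  fixes f :: "nat \<Rightarrow> nat list \<Rightarrow> real" and B l t :: real
  assumes mart: "\<And>m ds. m < N \<Longrightarrow> ds \<in> set_pmf (modelA_aux \<delta> m) \<Longrightarrow>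
      measure_pmf.expectation (modelA_step \<delta> ds) (f (Suc m)) = f m ds"
    and bd: "\<And>m ds i. m < N \<Longrightarrow> ds \<in> set_pmf (modelA_aux \<delta> m) \<Longrightarrow> i < Suc m \<Longrightarrow>
      \<bar>f (Suc m) (upd ds i) - f m ds\<bar> \<le> B"
    and l: "l > 0"
  shows "measure_pmf.prob (modelA_aux \<delta> N) {ds. f N ds - f 0 [2] \<ge> t}
     \<le> exp (- l * t) * exp (real N * (l\<^sup>2 * B\<^sup>2 / 2))"
proof -
  let ?c = "f 0 [2]"
  let ?A = "{ds. f N ds - f 0 [2] \<ge> t}"
  have "emeasure (measure_pmf (modelA_aux \<delta> N)) ?A = (\<integral>\<^sup>+ds. indicator ?A ds \<partial>modelA_aux \<delta> N)"
    by simp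
  also have "\<dots> \<le> (\<integral>\<^sup>+ds. ennreal (exp (- l * t)) * ennreal (exp (l * (f N ds - ?c))) \<partial>modelA_aux \<delta> N)"
  proof (rule nn_integral_mono)
    fix x
    show "indicator ?A x \<le> ennreal (exp (- l * t)) * ennreal (exp (l * (f N x - ?c)))"
    proof (cases "x \<in> ?A")
      case True
      then have "0 \<le> l * (f N x - ?c - t)" using l by simp
      then have "1 \<le> exp (l * (f N x - ?c - t))" by simp
      also have "\<dots> = exp (- l * t) * exp (l * (f N x - ?c))" by (simp add: exp_add[symmetric] algebra_simps)
      finally show ?thesis using True by (simp add: ennreal_mult[symmetric])
    qed simp
  qed
  also have "\<dots> = ennreal (exp (- l * t)) * (\<integral>\<^sup>+ds. ennreal (exp (l * (f N ds - ?c))) \<partial>modelA_aux \<delta> N)"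
    by (rule nn_integral_cmult) simp
  also have "\<dots> \<le> ennreal (exp (- l * t)) * ennreal (exp (real N * (l\<^sup>2 * B\<^sup>2 / 2)))"
    by (intro mult_left_mono azuma_nn[where N=N and f=f and B=B and l=l, OF mart bd l]) auto
  also have "\<dots> = ennreal (exp (- l * t) * exp (real N * (l\<^sup>2 * B\<^sup>2 / 2)))"
    by (simp add: ennreal_mult)
  finally show ?thesis by (simp add: measure_pmf.emeasure_eq_measure)
qed

end



context
  fixes \<delta> :: real
  assumes dgt: "\<delta> > -1"
begin

lemma tail_k:
  assumes N: "1 \<le> N" and t: "t > 0"
  shows "measure_pmf.prob (modelA_aux \<delta> N)
      {ds. \<bar>real (N_gt k ds) - measure_pmf.expectation (modelA_aux \<delta> N) (\<lambda>x. real (N_gt k x))\<bar> \<ge> t}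
    \<le> 2 * exp (- (t\<^sup>2) / (8 * real N))"
proof -
  define f where "f = ff \<delta> k N"
  define g where "g = (\<lambda>m ds. - f m ds)"
  let ?c = "f 0 [2]"
  let ?M = "modelA_aux \<delta> N"
  have mf: "measure_pmf.expectation (modelA_step \<delta> ds) (f (Suc m)) = f m ds"
    if "m < N" "ds \<in> set_pmf (modelA_aux \<delta> m)" for m ds
    unfolding f_def by (rule ff_mart(1)[OF dgt that])
  have bf: "\<bar>f (Suc m) (upd ds i) - f m ds\<bar> \<le> 2"
    if "m < N" "ds \<in> set_pmf (modelA_aux \<delta> m)" "i < Suc m" for m ds i
    unfolding f_def by (rule ff_mart(2)[OF dgt that])
  have mg: "measure_pmf.expectation (modelA_step \<delta> ds) (g (Suc m)) = g m ds"
    if "m < N" "ds \<in> set_pmf (modelA_aux \<delta> m)" for m ds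
    using mf[OF that] by (simp add: g_def)
  have bg: "\<bar>g (Suc m) (upd ds i) - g m ds\<bar> \<le> 2"
    if "m < N" "ds \<in> set_pmf (modelA_aux \<delta> m)" "i < Suc m" for m ds i
    using bf[OF that] by (simp add: g_def abs_minus_commute)
  have E: "measure_pmf.expectation ?M (\<lambda>x. real (N_gt k x)) = ?c"
  proof -
    have "measure_pmf.expectation ?M (\<lambda>x. real (N_gt k x)) = measure_pmf.expectation ?M (f N)"
      by (rule pmf_int_cong) (simp add: f_def ff_final[OF dgt])
    also have "\<dots> = ?c" by (rule mart_exp[OF dgt, where N=N and f=f, OF mf]) auto
    finally show ?thesis .
  qed
  define l where "l = t / (4 * real N)"
  have Npos: "real N > 0" using N by simp
  have l: "l > 0" using t Npos by (simp add: l_def)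
  have ex: "exp (- l * t) * exp (real N * (l\<^sup>2 * 2\<^sup>2 / 2)) = exp (- (t\<^sup>2) / (8 * real N))"
  proof -
    have "- l * t + real N * (l\<^sup>2 * 2\<^sup>2 / 2) = - (t\<^sup>2) / (8 * real N)"
      using Npos by (simp add: l_def field_simps power2_eq_square)
    then show ?thesis by (simp add: exp_add[symmetric])
  qed
  have P1: "measure_pmf.prob ?M {ds. f N ds - f 0 [2] \<ge> t} \<le> exp (- (t\<^sup>2) / (8 * real N))"
    using azuma_tail[OF dgt, where N=N and f=f and B=2 and l=l and t=t, OF mf bf l] ex by simp
  have P2: "measure_pmf.prob ?M {ds. g N ds - g 0 [2] \<ge> t} \<le> exp (- (t\<^sup>2) / (8 * real N))"
    using azuma_tail[OF dgt, where N=N and f=g and B=2 and l=l and t=t, OF mg bg l] ex by simp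
  let ?S = "{ds. \<bar>real (N_gt k ds) - measure_pmf.expectation ?M (\<lambda>x. real (N_gt k x))\<bar> \<ge> t}"
  have sub: "?S \<inter> set_pmf ?M \<subseteq> {ds. f N ds - f 0 [2] \<ge> t} \<union> {ds. g N ds - g 0 [2] \<ge> t}"
  proof
    fix ds assume a: "ds \<in> ?S \<inter> set_pmf ?M"
    then have "f N ds = real (N_gt k ds)" by (simp add: f_def ff_final[OF dgt])
    then have "t \<le> \<bar>f N ds - ?c\<bar>" using a E by simp
    then show "ds \<in> {ds. f N ds - f 0 [2] \<ge> t} \<union> {ds. g N ds - g 0 [2] \<ge> t}"
      by (auto simp: g_def abs_if split: if_split_asm)
  qed
  have "measure_pmf.prob ?M ?S = measure_pmf.prob ?M (?S \<inter> set_pmf ?M)"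
    by (simp add: measure_Int_set_pmf)
  also have "\<dots> \<le> measure_pmf.prob ?M ({ds. f N ds - f 0 [2] \<ge> t} \<union> {ds. g N ds - g 0 [2] \<ge> t})"
    by (rule measure_pmf.finite_measure_mono[OF sub]) simp
  also have "\<dots> \<le> measure_pmf.prob ?M {ds. f N ds - f 0 [2] \<ge> t} + measure_pmf.prob ?M {ds. g N ds - g 0 [2] \<ge> t}"
    by (rule measure_Un_le) simp_all
  also have "\<dots> \<le> 2 * exp (- (t\<^sup>2) / (8 * real N))" using P1 P2 by simp
  finally show ?thesis .
qed

lemma main_bound:
  assumes n: "n \<ge> 2"
  shows "measure_pmf.prob (modelA \<delta> n)
            {ds. \<exists>k. \<bar>real (N_gt k ds) - real n * p_gt \<delta> k\<bar>
                       \<ge> 4 * (1 + sqrt (real n * ln (real n)))} \<le> 4 / real n"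
proof -
  define N where "N = n - 1"
  have nN: "n = Suc N" "1 \<le> N" using n by (auto simp: N_def)
  let ?M = "modelA_aux \<delta> N"
  have M: "modelA \<delta> n = ?M" by (simp add: modelA_def N_def)
  define t where "t = 4 * sqrt (real n * ln (real n))"
  define Ek where "Ek k = measure_pmf.expectation ?M (\<lambda>x. real (N_gt k x))" for k
  have lnpos: "ln (real n) > 0" using n by simp
  have t: "t > 0" using n lnpos by (simp add: t_def)
  have Eb: "\<bar>Ek k - real n * p_gt \<delta> k\<bar> \<le> 1" for k
    using ee_bound'[OF dgt, of N k] nN by (simp add: Ek_def)
  let ?E = "{ds. \<exists>k. \<bar>real (N_gt k ds) - real n * p_gt \<delta> k\<bar> \<ge> 4 * (1 + sqrt (real n * ln (real n)))}"
  let ?U = "\<Union>k\<in>{..n}. {ds. \<bar>real (N_gt k ds) - Ek k\<bar> \<ge> t}"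
  have sub: "?E \<inter> set_pmf ?M \<subseteq> ?U"
  proof
    fix ds assume a: "ds \<in> ?E \<inter> set_pmf ?M"
    then obtain k where k: "\<bar>real (N_gt k ds) - real n * p_gt \<delta> k\<bar> \<ge> 4 * (1 + sqrt (real n * ln (real n)))"
      by auto
    have inv: "dinv n ds" using inv_aux[OF dgt] a nN by auto
    have kn: "k \<le> n"
    proof (rule ccontr)
      assume "\<not> k \<le> n"
      then have kk: "k \<ge> n + 1" by simp
      then have z: "N_gt k ds = 0" using Ngt_zero_big[OF inv] by simp
      have a1: "real n * p_gt \<delta> k \<le> real k * p_gt \<delta> k"
        using kk p_props[OF dgt, of k] by (intro mult_right_mono) auto
      have a2: "0 \<le> real n * p_gt \<delta> k" using p_props[OF dgt, of k] by simp
      have a3: "0 \<le> sqrt (real n * ln (real n))" using lnpos by simp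
      have a4: "\<bar>real (N_gt k ds) - real n * p_gt \<delta> k\<bar> = real n * p_gt \<delta> k" using z a2 by simp
      have a5: "real k * p_gt \<delta> k \<le> 1" using p_props[OF dgt, of k] by simp
      have a6: "4 + 4 * sqrt (real n * ln (real n)) \<le> real n * p_gt \<delta> k" using k a4 by simp
      show False using a6 a1 a3 a5 by linarith
    qed
    have tri: "\<bar>real (N_gt k ds) - real n * p_gt \<delta> k\<bar> \<le> \<bar>real (N_gt k ds) - Ek k\<bar> + \<bar>Ek k - real n * p_gt \<delta> k\<bar>"
      using abs_triangle_ineq[of "real (N_gt k ds) - Ek k" "Ek k - real n * p_gt \<delta> k"] by simp
    have "\<bar>real (N_gt k ds) - Ek k\<bar> \<ge> t"
    proof -
      have k': "4 + 4 * sqrt (real n * ln (real n)) \<le> \<bar>real (N_gt k ds) - real n * p_gt \<delta> k\<bar>"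
        using k by (simp add: algebra_simps)
      show ?thesis using k' Eb[of k] tri unfolding t_def by linarith
    qed
    then show "ds \<in> ?U" using kn by auto
  qed
  have "measure_pmf.prob (modelA \<delta> n) ?E = measure_pmf.prob ?M (?E \<inter> set_pmf ?M)"
    by (simp add: measure_Int_set_pmf M)
  also have "\<dots> \<le> measure_pmf.prob ?M ?U"
    by (rule measure_pmf.finite_measure_mono[OF sub]) simp
  also have "\<dots> \<le> (\<Sum>k\<in>{..n}. measure_pmf.prob ?M {ds. \<bar>real (N_gt k ds) - Ek k\<bar> \<ge> t})"
    by (rule measure_pmf.finite_measure_subadditive_finite) auto
  also have "\<dots> \<le> (\<Sum>k\<in>{..n}. 2 * exp (- (t\<^sup>2) / (8 * real N)))"
    by (rule sum_mono) (unfold Ek_def, rule tail_k[OF nN(2) t])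
  also have "\<dots> = (real n + 1) * (2 * exp (- (t\<^sup>2) / (8 * real N)))" by simp
  also have "\<dots> \<le> (real n + 1) * (2 * (1 / (real n * real n)))"
  proof -
    have t2: "t\<^sup>2 = 16 * (real n * ln (real n))"
      using lnpos by (simp add: t_def power_mult_distrib)
    have "2 * ln (real n) * real N \<le> 2 * ln (real n) * real n" using lnpos nN by simp
    then have "2 * ln (real n) \<le> t\<^sup>2 / (8 * real N)"
      using nN t2 by (simp add: field_simps)
    then have "exp (- (t\<^sup>2) / (8 * real N)) \<le> exp (- (ln (real n) + ln (real n)))" by simp
    also have "\<dots> = 1 / (real n * real n)"
    proof -
      have np: "real n > 0" using n by simp
      have e: "exp (ln (real n) + ln (real n)) = real n * real n"
        unfolding exp_add using exp_ln[OF np] by simp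
      show ?thesis unfolding exp_minus e by (simp add: inverse_eq_divide)
    qed
    finally show ?thesis by (intro mult_left_mono) auto
  qed
  also have "\<dots> \<le> 4 / real n"
  proof -
    have "real n > 0" using n by simp
    then have "(real n + 1) * (2 * (1 / (real n * real n))) = 2 * (real n + 1) / real n / real n" by (simp add: field_simps)
    also have "\<dots> \<le> 4 / real n"
    proof -
      have "2 * (real n + 1) / real n \<le> 4" using n by (simp add: field_simps)
      then show ?thesis by (rule divide_right_mono) (use \<open>real n > 0\<close> in simp)
    qed
    finally show ?thesis .
  qed
  finally show ?thesis .
qed

end

theorem mainTheorem6:
  fixes \<delta> :: real
  assumes "\<delta> > -1"
  shows "\<exists>C>0. (\<lambda>n::nat. measure_pmf.prob (modelA \<delta> n)
            {ds. \<exists>k. \<bar>real (N_gt k ds) - real n * p_gt \<delta> k\<bar>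
                       \<ge> C * (1 + sqrt (real n * ln (real n)))}) \<longlonglongrightarrow> 0"
proof (intro exI conjI)
  show "(4::real) > 0" by simp
  show "(\<lambda>n::nat. measure_pmf.prob (modelA \<delta> n)
            {ds. \<exists>k. \<bar>real (N_gt k ds) - real n * p_gt \<delta> k\<bar>
                       \<ge> 4 * (1 + sqrt (real n * ln (real n)))}) \<longlonglongrightarrow> 0"
  proof (rule tendsto_sandwich[OF _ _ tendsto_const lim_const_over_n[of "4::real"]])
    show "\<forall>\<^sub>F n in sequentially. 0 \<le> measure_pmf.prob (modelA \<delta> n)
            {ds. \<exists>k. \<bar>real (N_gt k ds) - real n * p_gt \<delta> k\<bar>
                       \<ge> 4 * (1 + sqrt (real n * ln (real n)))}" by simp
    show "\<forall>\<^sub>F n in sequentially. measure_pmf.prob (modelA \<delta> n)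
            {ds. \<exists>k. \<bar>real (N_gt k ds) - real n * p_gt \<delta> k\<bar>
                       \<ge> 4 * (1 + sqrt (real n * ln (real n)))} \<le> 4 / real n"
      using eventually_ge_at_top[of "2::nat"]
      by eventually_elim (rule main_bound[OF assms])
  qed
qed



end
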